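(* Let $n\geq 3$ be an integer, let $\varphi : X \to X$ be a morphism in $\mathscr{C}$, and let $\kappa : K \to X$ be a kernel of $\varphi$. Then $\varphi$ has a core inverse if and only if $\varphi$ has a cokernel $\lambda : X \to L$ such that both $\kappa\lambda : K\to L$ and $\varphi^{*}\varphi^{n}+\kappa^{*}\kappa : X\to X$ are invertible. In this case $$\varphi^{\mathrm{core}}=\varphi^{n-1}(\varphi^{*}\varphi^{n}+\kappa^{*}\kappa)^{-1}\varphi^{*}.$$
   Context: $\mathscr{C}$ is an additive category with an involution $*$: a map on morphisms sending $\varphi : X\to Y$ to $\varphi^* : Y \to X$ such that $(\varphi^* )^*=\varphi$, $(\varphi\psi)^*=\psi^*\varphi^*$ and $(\varphi+\phi)^*=\varphi^*+\phi^*$. Composition is written left to right: for $\varphi : X\to Y$ and $\psi : Y\to Z$, $\varphi\psi : X \to Z$ means "first $\varphi$, then $\psi$". A kernel of $\varphi : X\to Y$ is a morphism $\kappa : K\to X$ with $\kappa\varphi=0$ such that every $\alpha : M\to X$ with $\alpha\varphi=0$ factors uniquely as $\alpha=\alpha'\kappa$. A cokernel of $\varphi$ is a morphism $\lambda : Y\to L$ with $\varphi\lambda=0$ such that every $\beta : Y\to M$ with $\varphi\beta=0$ factors uniquely as $\beta=\lambda\beta'$. A morphism is invertible if it has a two-sided inverse. For $\varphi : X\to X$, a core inverse of $\varphi$ is a morphism $\chi : X\to X$ with $(\varphi\chi)^*=\varphi\chi$, $\varphi\chi^2=\chi$ and $\chi\varphi^2=\varphi$. It is unique when it exists and is denoted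 $\varphi^{\mathrm{core}}$. *)

theory Defs
  imports Main
begin

text \<open>Composition comp f g is written left to
  right: first f, then g (as in the paper).\<close>

record ('o, 'm) invcat =
  obj    :: "'o set"
  hom    :: "'o \<Rightarrow> 'o \<Rightarrow> 'm set"
  comp   :: "'m \<Rightarrow> 'm \<Rightarrow> 'm"
  ident  :: "'o \<Rightarrow> 'm"
  zero_m :: "'o \<Rightarrow> 'o \<Rightarrow> 'm"
  plus_m :: "'m \<Rightarrow> 'm \<Rightarrow> 'm"
  neg_m  :: "'m \<Rightarrow> 'm"
  star_m :: "'m \<Rightarrow> 'm"

definition is_category :: "('o, 'm, 'x) invcat_scheme \<Rightarrow> bool" where
  "is_category C \<longleftrightarrow>
     (\<forall>A B. (A \<notin> obj C \<or> B \<notin> obj C) \<longrightarrow> hom C A B = {}) \<and>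
     (\<forall>A B A' B'. hom C A B \<inter> hom C A' B' \<noteq> {} \<longrightarrow> A = A' \<and> B = B') \<and>
     (\<forall>A\<in>obj C. ident C A \<in> hom C A A) \<and>
     (\<forall>A B D f g. f \<in> hom C A B \<longrightarrow> g \<in> hom C B D \<longrightarrow> comp C f g \<in> hom C A D) \<and>
     (\<forall>A B D E f g h. f \<in> hom C A B \<longrightarrow> g \<in> hom C B D \<longrightarrow> h \<in> hom C D E \<longrightarrow>
        comp C (comp C f g) h = comp C f (comp C g h)) \<and>
     (\<forall>A B f. f \<in> hom C A B \<longrightarrow> comp C (ident C A) f = f \<and> comp C f (ident C B) = f)"

definition is_preadditive :: "('o, 'm, 'x) invcat_scheme \<Rightarrow> bool" where
  "is_preadditive C \<longleftrightarrow> is_category C \<and>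
     (\<forall>A\<in>obj C. \<forall>B\<in>obj C.
        zero_m C A B \<in> hom C A B \<and>
        (\<forall>f\<in>hom C A B. \<forall>g\<in>hom C A B. plus_m C f g \<in> hom C A B) \<and>
        (\<forall>f\<in>hom C A B. neg_m C f \<in> hom C A B) \<and>
        (\<forall>f\<in>hom C A B. \<forall>g\<in>hom C A B. \<forall>h\<in>hom C A B.
            plus_m C (plus_m C f g) h = plus_m C f (plus_m C g h)) \<and>
        (\<forall>f\<in>hom C A B. \<forall>g\<in>hom C A B. plus_m C f g = plus_m C g f) \<and>
        (\<forall>f\<in>hom C A B. plus_m C (zero_m C A B) f = f) \<and>
        (\<forall>f\<in>hom C A B. plus_m C (neg_m C f) f = zero_m C A B)) \<and>
     (\<forall>A B D f g h. f \<in> hom C A B \<longrightarrow> g \<in> hom C A B \<longrightarrow> h \<in> hom C B D \<longrightarrow>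
        comp C (plus_m C f g) h = plus_m C (comp C f h) (comp C g h)) \<and>
     (\<forall>A B D f g h. f \<in> hom C A B \<longrightarrow> g \<in> hom C B D \<longrightarrow> h \<in> hom C B D \<longrightarrow>
        comp C f (plus_m C g h) = plus_m C (comp C f g) (comp C f h))"

definition is_additive :: "('o, 'm, 'x) invcat_scheme \<Rightarrow> bool" where
  "is_additive C \<longleftrightarrow> is_preadditive C \<and>
     (\<exists>Z\<in>obj C. ident C Z = zero_m C Z Z) \<and>
     (\<forall>A\<in>obj C. \<forall>B\<in>obj C. \<exists>P\<in>obj C.
        \<exists>i1\<in>hom C A P. \<exists>i2\<in>hom C B P. \<exists>p1\<in>hom C P A. \<exists>p2\<in>hom C P B.
          comp C i1 p1 = ident C A \<and> comp C i2 p2 = ident C B \<and>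
          comp C i1 p2 = zero_m C A B \<and> comp C i2 p1 = zero_m C B A \<and>
          plus_m C (comp C p1 i1) (comp C p2 i2) = ident C P)"

definition is_additive_invcat :: "('o, 'm, 'x) invcat_scheme \<Rightarrow> bool" where
  "is_additive_invcat C \<longleftrightarrow> is_additive C \<and>
     (\<forall>A B f. f \<in> hom C A B \<longrightarrow> star_m C f \<in> hom C B A \<and> star_m C (star_m C f) = f) \<and>
     (\<forall>A B D f g. f \<in> hom C A B \<longrightarrow> g \<in> hom C B D \<longrightarrow>
        star_m C (comp C f g) = comp C (star_m C g) (star_m C f)) \<and>
     (\<forall>A B f g. f \<in> hom C A B \<longrightarrow> g \<in> hom C A B \<longrightarrow>
        star_m C (plus_m C f g) = plus_m C (star_m C f) (star_m C g))"

definition is_kernel :: "('o, 'm, 'x) invcat_scheme \<Rightarrow> 'o \<Rightarrow> 'o \<Rightarrow> 'm \<Rightarrow> 'o \<Rightarrow> 'm \<Rightarrow> bool" where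
  "is_kernel C X Y \<phi> K \<kappa> \<longleftrightarrow> \<kappa> \<in> hom C K X \<and> comp C \<kappa> \<phi> = zero_m C K Y \<and>
     (\<forall>M\<in>obj C. \<forall>\<alpha>\<in>hom C M X. comp C \<alpha> \<phi> = zero_m C M Y \<longrightarrow>
        (\<exists>!\<alpha>'. \<alpha>' \<in> hom C M K \<and> \<alpha> = comp C \<alpha>' \<kappa>))"

definition is_cokernel :: "('o, 'm, 'x) invcat_scheme \<Rightarrow> 'o \<Rightarrow> 'o \<Rightarrow> 'm \<Rightarrow> 'o \<Rightarrow> 'm \<Rightarrow> bool" where
  "is_cokernel C X Y \<phi> L lm \<longleftrightarrow> lm \<in> hom C Y L \<and> comp C \<phi> lm = zero_m C X L \<and>
     (\<forall>M\<in>obj C. \<forall>\<beta>\<in>hom C Y M. comp C \<phi> \<beta> = zero_m C X M \<longrightarrow>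
        (\<exists>!\<beta>'. \<beta>' \<in> hom C L M \<and> \<beta> = comp C lm \<beta>'))"

definition is_inverse :: "('o, 'm, 'x) invcat_scheme \<Rightarrow> 'o \<Rightarrow> 'o \<Rightarrow> 'm \<Rightarrow> 'm \<Rightarrow> bool" where
  "is_inverse C A B f g \<longleftrightarrow> f \<in> hom C A B \<and> g \<in> hom C B A \<and>
     comp C f g = ident C A \<and> comp C g f = ident C B"

definition invertible :: "('o, 'm, 'x) invcat_scheme \<Rightarrow> 'o \<Rightarrow> 'o \<Rightarrow> 'm \<Rightarrow> bool" where
  "invertible C A B f \<longleftrightarrow> (\<exists>g. is_inverse C A B f g)"

definition inverse_m :: "('o, 'm, 'x) invcat_scheme \<Rightarrow> 'o \<Rightarrow> 'o \<Rightarrow> 'm \<Rightarrow> 'm" where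
  "inverse_m C A B f = (THE g. is_inverse C A B f g)"

fun mpow :: "('o, 'm, 'x) invcat_scheme \<Rightarrow> 'o \<Rightarrow> 'm \<Rightarrow> nat \<Rightarrow> 'm" where
  "mpow C X f 0 = ident C X"
| "mpow C X f (Suc k) = comp C (mpow C X f k) f"

definition is_core_inverse :: "('o, 'm, 'x) invcat_scheme \<Rightarrow> 'o \<Rightarrow> 'm \<Rightarrow> 'm \<Rightarrow> bool" where
  "is_core_inverse C X \<phi> \<chi> \<longleftrightarrow> \<chi> \<in> hom C X X \<and>
     star_m C (comp C \<phi> \<chi>) = comp C \<phi> \<chi> \<and>
     comp C \<phi> (comp C \<chi> \<chi>) = \<chi> \<and>
     comp C \<chi> (comp C \<phi> \<phi>) = \<phi>"

definition has_core_inverse :: "('o, 'm, 'x) invcat_scheme \<Rightarrow> 'o \<Rightarrow> 'm \<Rightarrow> bool" where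
  "has_core_inverse C X \<phi> \<longleftrightarrow> (\<exists>\<chi>. is_core_inverse C X \<phi> \<chi>)"

definition core_inverse :: "('o, 'm, 'x) invcat_scheme \<Rightarrow> 'o \<Rightarrow> 'm \<Rightarrow> 'm" where
  "core_inverse C X \<phi> = (THE \<chi>. is_core_inverse C X \<phi> \<chi>)"

end

theory Submission
  imports Defs
begin

locale aic =
  fixes C :: "('o, 'm) invcat"
  assumes AX: "is_additive_invcat C"
begin

abbreviation cp (infixr "\<cdot>" 80) where "f \<cdot> g \<equiv> comp C f g"
abbreviation pl where "pl f g \<equiv> plus_m C f g"
abbreviation ng where "ng f \<equiv> neg_m C f"
abbreviation st where "st f \<equiv> star_m C f"
abbreviation zr where "zr A B \<equiv> zero_m C A B"
abbreviation idt where "idt A \<equiv> ident C A"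
abbreviation H where "H A B \<equiv> hom C A B"

definition arr where "arr f \<longleftrightarrow> (\<exists>A B. f \<in> H A B)"
definition dm where "dm f = (THE A. \<exists>B. f \<in> H A B)"
definition cd where "cd f = (THE B. \<exists>A. f \<in> H A B)"

lemma ADD: "is_additive C" using AX unfolding is_additive_invcat_def by blast
lemma PRE: "is_preadditive C" using ADD unfolding is_additive_def by blast
lemma CAT: "is_category C" using PRE unfolding is_preadditive_def by blast

lemma C1: "\<forall>A B. (A \<notin> obj C \<or> B \<notin> obj C) \<longrightarrow> hom C A B = {}"
  using CAT unfolding is_category_def by (elim conjE) assumption
lemma C2: "\<forall>A B A' B'. hom C A B \<inter> hom C A' B' \<noteq> {} \<longrightarrow> A = A' \<and> B = B'"
  using CAT unfolding is_category_def by (elim conjE) assumption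
lemma C3: "\<forall>A\<in>obj C. ident C A \<in> hom C A A"
  using CAT unfolding is_category_def by (elim conjE) assumption
lemma C4: "\<forall>A B D f g. f \<in> hom C A B \<longrightarrow> g \<in> hom C B D \<longrightarrow> comp C f g \<in> hom C A D"
  using CAT unfolding is_category_def by (elim conjE) assumption
lemma C5: "\<forall>A B D E f g h. f \<in> hom C A B \<longrightarrow> g \<in> hom C B D \<longrightarrow> h \<in> hom C D E \<longrightarrow>
        comp C (comp C f g) h = comp C f (comp C g h)"
  using CAT unfolding is_category_def by (elim conjE) assumption
lemma C6: "\<forall>A B f. f \<in> hom C A B \<longrightarrow> comp C (ident C A) f = f \<and> comp C f (ident C B) = f"
  using CAT unfolding is_category_def by (elim conjE) assumption

lemma hom_uniq: "f \<in> H A B \<Longrightarrow> f \<in> H A' B' \<Longrightarrow> A = A' \<and> B = B'"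
  using C2 by blast

lemma hom_obj: "f \<in> H A B \<Longrightarrow> A \<in> obj C \<and> B \<in> obj C"
  using C1 by blast

lemma homI: assumes "f \<in> H A B" shows "arr f" "dm f = A" "cd f = B"
proof -
  show "arr f" using assms arr_def by blast
  show "dm f = A" unfolding dm_def using assms hom_uniq by blast
  show "cd f = B" unfolding cd_def using assms hom_uniq by blast
qed

lemma arr_hom: "arr f \<Longrightarrow> f \<in> H (dm f) (cd f)"
  using homI arr_def by metis

lemma arr_obj[simp]: "arr f \<Longrightarrow> dm f \<in> obj C" "arr f \<Longrightarrow> cd f \<in> obj C"
  using arr_hom hom_obj by blast+

lemma comp_hom: "f \<in> H A B \<Longrightarrow> g \<in> H B D \<Longrightarrow> f \<cdot> g \<in> H A D"
  using C4 by blast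

lemma comp_arr[simp]:
  assumes "arr f" "arr g" "cd f = dm g"
  shows "arr (f \<cdot> g)" "dm (f \<cdot> g) = dm f" "cd (f \<cdot> g) = cd g"
proof -
  have "g \<in> H (cd f) (cd g)" using assms arr_hom by metis
  then have "f \<cdot> g \<in> H (dm f) (cd g)" using comp_hom arr_hom[OF assms(1)] by blast
  then show "arr (f \<cdot> g)" "dm (f \<cdot> g) = dm f" "cd (f \<cdot> g) = cd g" using homI by auto
qed

lemma assoc[simp]:
  assumes "arr f" "arr g" "arr h" "cd f = dm g" "cd g = dm h"
  shows "(f \<cdot> g) \<cdot> h = f \<cdot> (g \<cdot> h)"
  using C5 arr_hom[OF assms(1)] arr_hom[OF assms(2)] arr_hom[OF assms(3)] assms(4,5)
  by metis

lemma id_arr[simp]: "A \<in> obj C \<Longrightarrow> arr (idt A)" "A \<in> obj C \<Longrightarrow> dm (idt A) = A"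
   "A \<in> obj C \<Longrightarrow> cd (idt A) = A"
  using C3 homI by metis+

lemma id_l[simp]: "arr f \<Longrightarrow> dm f = A \<Longrightarrow> idt A \<cdot> f = f"
  and id_r[simp]: "arr f \<Longrightarrow> cd f = A \<Longrightarrow> f \<cdot> idt A = f"
  using C6 arr_hom by metis+

lemma PA: "\<And>A B. A \<in> obj C \<Longrightarrow> B \<in> obj C \<Longrightarrow>
        zr A B \<in> H A B \<and>
        (\<forall>f\<in>H A B. \<forall>g\<in>H A B. pl f g \<in> H A B) \<and>
        (\<forall>f\<in>H A B. ng f \<in> H A B) \<and>
        (\<forall>f\<in>H A B. \<forall>g\<in>H A B. \<forall>h\<in>H A B. pl (pl f g) h = pl f (pl g h)) \<and>
        (\<forall>f\<in>H A B. \<forall>g\<in>H A B. pl f g = pl g f) \<and>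
        (\<forall>f\<in>H A B. pl (zr A B) f = f) \<and>
        (\<forall>f\<in>H A B. pl (ng f) f = zr A B)"
proof -
  have "\<forall>A\<in>obj C. \<forall>B\<in>obj C.
        zr A B \<in> H A B \<and>
        (\<forall>f\<in>H A B. \<forall>g\<in>H A B. pl f g \<in> H A B) \<and>
        (\<forall>f\<in>H A B. ng f \<in> H A B) \<and>
        (\<forall>f\<in>H A B. \<forall>g\<in>H A B. \<forall>h\<in>H A B. pl (pl f g) h = pl f (pl g h)) \<and>
        (\<forall>f\<in>H A B. \<forall>g\<in>H A B. pl f g = pl g f) \<and>
        (\<forall>f\<in>H A B. pl (zr A B) f = f) \<and>
        (\<forall>f\<in>H A B. pl (ng f) f = zr A B)"
    using PRE unfolding is_preadditive_def by (elim conjE) assumption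
  then show "\<And>A B. A \<in> obj C \<Longrightarrow> B \<in> obj C \<Longrightarrow> ?thesis A B" by blast
qed

lemma P2: "\<forall>A B D f g h. f \<in> H A B \<longrightarrow> g \<in> H A B \<longrightarrow> h \<in> H B D \<longrightarrow>
        (pl f g) \<cdot> h = pl (f \<cdot> h) (g \<cdot> h)"
  using PRE unfolding is_preadditive_def by (elim conjE) assumption
lemma P3: "\<forall>A B D f g h. f \<in> H A B \<longrightarrow> g \<in> H B D \<longrightarrow> h \<in> H B D \<longrightarrow>
        f \<cdot> (pl g h) = pl (f \<cdot> g) (f \<cdot> h)"
  using PRE unfolding is_preadditive_def by (elim conjE) assumption

lemma zr_arr[simp]: "A \<in> obj C \<Longrightarrow> B \<in> obj C \<Longrightarrow> arr (zr A B)"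
  "A \<in> obj C \<Longrightarrow> B \<in> obj C \<Longrightarrow> dm (zr A B) = A"
  "A \<in> obj C \<Longrightarrow> B \<in> obj C \<Longrightarrow> cd (zr A B) = B"
  using PA homI by metis+

lemma pl_arr[simp]:
  assumes "arr f" "arr g" "dm f = dm g" "cd f = cd g"
  shows "arr (pl f g)" "dm (pl f g) = dm f" "cd (pl f g) = cd f"
proof -
  have "pl f g \<in> H (dm f) (cd f)" using PA[of "dm f" "cd f"] arr_hom assms by (metis arr_obj)
  then show "arr (pl f g)" "dm (pl f g) = dm f" "cd (pl f g) = cd f" using homI by auto
qed

lemma ng_arr[simp]:
  assumes "arr f"
  shows "arr (ng f)" "dm (ng f) = dm f" "cd (ng f) = cd f"
proof -
  have "ng f \<in> H (dm f) (cd f)" using PA[of "dm f" "cd f"] arr_hom assms by (metis arr_obj)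
  then show "arr (ng f)" "dm (ng f) = dm f" "cd (ng f) = cd f" using homI by auto
qed

lemma pl_assoc:
  assumes "arr f" "arr g" "arr h" "dm f = dm g" "cd f = cd g" "dm f = dm h" "cd f = cd h"
  shows "pl (pl f g) h = pl f (pl g h)"
  using PA[of "dm f" "cd f"] arr_hom assms by (metis arr_obj)

lemma pl_comm:
  assumes "arr f" "arr g" "dm f = dm g" "cd f = cd g"
  shows "pl f g = pl g f"
  using PA[of "dm f" "cd f"] arr_hom assms by (metis arr_obj)

lemma pl_zl[simp]: "arr f \<Longrightarrow> dm f = A \<Longrightarrow> cd f = B \<Longrightarrow> pl (zr A B) f = f"
  using PA arr_hom arr_obj by metis

lemma pl_zr[simp]: "arr f \<Longrightarrow> dm f = A \<Longrightarrow> cd f = B \<Longrightarrow> pl f (zr A B) = f"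
  using pl_zl pl_comm by (metis zr_arr arr_obj)

lemma ng_l[simp]: "arr f \<Longrightarrow> dm f = A \<Longrightarrow> cd f = B \<Longrightarrow> pl (ng f) f = zr A B"
  using PA arr_hom arr_obj by metis

lemma ng_r[simp]: "arr f \<Longrightarrow> dm f = A \<Longrightarrow> cd f = B \<Longrightarrow> pl f (ng f) = zr A B"
  using ng_l pl_comm ng_arr by metis

lemma distr_l[simp]:
  assumes "arr f" "arr g" "arr h" "dm f = dm g" "cd f = cd g" "cd f = dm h"
  shows "(pl f g) \<cdot> h = pl (f \<cdot> h) (g \<cdot> h)"
proof -
  have "g \<in> H (dm f) (cd f)" "h \<in> H (cd f) (cd h)" using assms arr_hom by metis+
  then show ?thesis using P2 arr_hom[OF assms(1)] by blast
qed

lemma distr_r[simp]: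
  assumes "arr f" "arr g" "arr h" "dm g = dm h" "cd g = cd h" "cd f = dm g"
  shows "f \<cdot> (pl g h) = pl (f \<cdot> g) (f \<cdot> h)"
proof -
  have "g \<in> H (cd f) (cd g)" "h \<in> H (cd f) (cd g)" using assms arr_hom by metis+
  then show ?thesis using P3 arr_hom[OF assms(1)] by blast
qed

lemma neg_unique:
  assumes "arr x" "arr y" "dm x = dm y" "cd x = cd y" "pl x y = zr (dm y) (cd y)"
  shows "x = ng y"
proof -
  have "ng y = pl (pl x y) (ng y)" using assms by simp
  also have "\<dots> = pl x (pl y (ng y))" using assms(1-4) by (simp add: pl_assoc)
  also have "\<dots> = x" using assms by simp
  finally show ?thesis by (rule sym)
qed

lemma eq_of_diff:
  assumes "arr x" "arr y" "dm x = dm y" "cd x = cd y" "pl x (ng y) = zr (dm y) (cd y)"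
  shows "x = y"
proof -
  have "y = pl (pl x (ng y)) y" using assms by simp
  also have "\<dots> = pl x (pl (ng y) y)" using assms(1-4) by (simp add: pl_assoc)
  also have "\<dots> = x" using assms by simp
  finally show ?thesis by (rule sym)
qed

lemma zero_comp[simp]: "arr f \<Longrightarrow> dm f = B \<Longrightarrow> A \<in> obj C \<Longrightarrow> zr A B \<cdot> f = zr A (cd f)"
proof -
  assume a: "arr f" "dm f = B" "A \<in> obj C"
  have B: "B \<in> obj C" using a by auto
  let ?z = "zr A B \<cdot> f"
  have e: "pl (zr A B) (zr A B) = zr A B" using a B by simp
  have "(pl (zr A B) (zr A B)) \<cdot> f = pl ?z ?z" by (rule distr_l) (use a B in simp_all)
  then have z: "pl ?z ?z = ?z" unfolding e by (rule sym)
  have "zr A (cd f) = pl ?z (ng ?z)" using a B by simp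
  also have "\<dots> = pl (pl ?z ?z) (ng ?z)" using z by simp
  also have "\<dots> = pl ?z (pl ?z (ng ?z))" using a B by (simp add: pl_assoc)
  also have "\<dots> = ?z" using a B by simp
  finally show ?thesis by (rule sym)
qed

lemma comp_zero[simp]: "arr f \<Longrightarrow> cd f = A \<Longrightarrow> B \<in> obj C \<Longrightarrow> f \<cdot> zr A B = zr (dm f) B"
proof -
  assume a: "arr f" "cd f = A" "B \<in> obj C"
  have A: "A \<in> obj C" using a by auto
  let ?z = "f \<cdot> zr A B"
  have e: "pl (zr A B) (zr A B) = zr A B" using a A by simp
  have "f \<cdot> (pl (zr A B) (zr A B)) = pl ?z ?z" by (rule distr_r) (use a A in simp_all)
  then have z: "pl ?z ?z = ?z" unfolding e by (rule sym)
  have "zr (dm f) B = pl ?z (ng ?z)" using a A by simp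
  also have "\<dots> = pl (pl ?z ?z) (ng ?z)" using z by simp
  also have "\<dots> = pl ?z (pl ?z (ng ?z))" using a A by (simp add: pl_assoc)
  also have "\<dots> = ?z" using a A by simp
  finally show ?thesis by (rule sym)
qed

lemma ng_comp[simp]: "arr f \<Longrightarrow> arr g \<Longrightarrow> cd f = dm g \<Longrightarrow> ng f \<cdot> g = ng (f \<cdot> g)"
  apply (rule neg_unique)
  apply simp_all
  apply (subst distr_l[symmetric])
  apply simp_all
  done

lemma comp_ng[simp]: "arr f \<Longrightarrow> arr g \<Longrightarrow> cd f = dm g \<Longrightarrow> f \<cdot> ng g = ng (f \<cdot> g)"
  apply (rule neg_unique)
  apply simp_all
  apply (subst distr_r[symmetric])
  apply simp_all
  done

lemma ng_zero[simp]: "A \<in> obj C \<Longrightarrow> B \<in> obj C \<Longrightarrow> ng (zr A B) = zr A B"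
  by (metis neg_unique pl_zl zr_arr)

lemma STAR: "\<And>A B f. f \<in> H A B \<Longrightarrow> st f \<in> H B A \<and> st (st f) = f"
  "\<And>A B D f g. f \<in> H A B \<Longrightarrow> g \<in> H B D \<Longrightarrow> st (f \<cdot> g) = st g \<cdot> st f"
  "\<And>A B f g. f \<in> H A B \<Longrightarrow> g \<in> H A B \<Longrightarrow> st (pl f g) = pl (st f) (st g)"
proof -
  have "\<forall>A B f. f \<in> H A B \<longrightarrow> st f \<in> H B A \<and> st (st f) = f"
    using AX unfolding is_additive_invcat_def by (elim conjE) assumption
  moreover have "\<forall>A B D f g. f \<in> H A B \<longrightarrow> g \<in> H B D \<longrightarrow> st (f \<cdot> g) = st g \<cdot> st f"
    using AX unfolding is_additive_invcat_def by (elim conjE) assumption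
  moreover have "\<forall>A B f g. f \<in> H A B \<longrightarrow> g \<in> H A B \<longrightarrow> st (pl f g) = pl (st f) (st g)"
    using AX unfolding is_additive_invcat_def by (elim conjE) assumption
  ultimately show "\<And>A B f. f \<in> H A B \<Longrightarrow> st f \<in> H B A \<and> st (st f) = f"
  "\<And>A B D f g. f \<in> H A B \<Longrightarrow> g \<in> H B D \<Longrightarrow> st (f \<cdot> g) = st g \<cdot> st f"
  "\<And>A B f g. f \<in> H A B \<Longrightarrow> g \<in> H A B \<Longrightarrow> st (pl f g) = pl (st f) (st g)" by blast+
qed

lemma st_arr[simp]: "arr f \<Longrightarrow> arr (st f)" "arr f \<Longrightarrow> dm (st f) = cd f"
  "arr f \<Longrightarrow> cd (st f) = dm f" "arr f \<Longrightarrow> st (st f) = f"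
  using STAR(1) arr_hom homI by metis+

lemma st_comp[simp]: "arr f \<Longrightarrow> arr g \<Longrightarrow> cd f = dm g \<Longrightarrow> st (f \<cdot> g) = st g \<cdot> st f"
  using STAR(2) arr_hom by metis

lemma st_pl[simp]: "arr f \<Longrightarrow> arr g \<Longrightarrow> dm f = dm g \<Longrightarrow> cd f = cd g \<Longrightarrow> st (pl f g) = pl (st f) (st g)"
  using STAR(3) arr_hom by metis

lemma st_zero[simp]: "A \<in> obj C \<Longrightarrow> B \<in> obj C \<Longrightarrow> st (zr A B) = zr B A"
proof -
  assume a: "A \<in> obj C" "B \<in> obj C"
  let ?z = "st (zr A B)"
  have e: "pl (zr A B) (zr A B) = zr A B" using a by simp
  have "st (pl (zr A B) (zr A B)) = pl ?z ?z" by (rule st_pl) (use a in simp_all)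
  then have z: "pl ?z ?z = ?z" unfolding e by (rule sym)
  have "zr B A = pl ?z (ng ?z)" using a by simp
  also have "\<dots> = pl (pl ?z ?z) (ng ?z)" using z by simp
  also have "\<dots> = pl ?z (pl ?z (ng ?z))" using a by (simp add: pl_assoc)
  also have "\<dots> = ?z" using a by simp
  finally show ?thesis by (rule sym)
qed

lemma st_id[simp]: "A \<in> obj C \<Longrightarrow> st (idt A) = idt A"
proof -
  assume a: "A \<in> obj C"
  have "arr (st (idt A))" "dm (st (idt A)) = A" using a by simp_all
  then have 1: "st (idt A) = idt A \<cdot> st (idt A)" using id_l by metis
  have 2: "st (idt A \<cdot> st (idt A)) = idt A \<cdot> st (idt A)"
    using st_comp[of "idt A" "st (idt A)"] a by simp
  have "idt A = st (st (idt A))" using a by simp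
  also have "\<dots> = st (idt A \<cdot> st (idt A))" using 1 by (rule arg_cong)
  also have "\<dots> = st (idt A)" using 1 2 by simp
  finally show ?thesis by (rule sym)
qed

lemma ext2: "f \<cdot> g = h \<Longrightarrow> arr f \<Longrightarrow> arr g \<Longrightarrow> cd f = dm g \<Longrightarrow> arr x \<Longrightarrow> cd g = dm x
   \<Longrightarrow> f \<cdot> (g \<cdot> x) = h \<cdot> x"
  by (metis assoc)

lemma mpow_arr[simp]: "arr f \<Longrightarrow> dm f = X \<Longrightarrow> cd f = X \<Longrightarrow>
   arr (mpow C X f j) \<and> dm (mpow C X f j) = X \<and> cd (mpow C X f j) = X"
  by (induction j) auto

lemma mpow_comm: "arr f \<Longrightarrow> dm f = X \<Longrightarrow> cd f = X \<Longrightarrow> f \<cdot> mpow C X f j = mpow C X f j \<cdot> f"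
proof (induction j)
  case 0 then show ?case by simp
next
  case (Suc j)
  have "f \<cdot> mpow C X f (Suc j) = (f \<cdot> mpow C X f j) \<cdot> f" using Suc.prems mpow_arr[OF Suc.prems, of j] by simp
  also have "\<dots> = mpow C X f (Suc j) \<cdot> f" using Suc by simp
  finally show ?case .
qed

end

context aic
begin

lemma ext3: "f \<cdot> (g \<cdot> h) = r \<Longrightarrow> arr f \<Longrightarrow> arr g \<Longrightarrow> arr h \<Longrightarrow> cd f = dm g \<Longrightarrow> cd g = dm h
   \<Longrightarrow> arr x \<Longrightarrow> cd h = dm x \<Longrightarrow> f \<cdot> (g \<cdot> (h \<cdot> x)) = r \<cdot> x"
  by (metis assoc comp_arr)

lemma mp_arr[simp]: "arr f \<Longrightarrow> dm f = X \<Longrightarrow> cd f = X \<Longrightarrow> arr (mpow C X f j)"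
  "arr f \<Longrightarrow> dm f = X \<Longrightarrow> cd f = X \<Longrightarrow> dm (mpow C X f j) = X"
  "arr f \<Longrightarrow> dm f = X \<Longrightarrow> cd f = X \<Longrightarrow> cd (mpow C X f j) = X"
  using mpow_arr by blast+

lemma ker_facts:
  assumes "is_kernel C X X a K k" "a \<in> H X X"
  shows "arr k" "dm k = K" "cd k = X" "k \<cdot> a = zr K X"
  using assms homI unfolding is_kernel_def by auto

lemma ker_mono:
  assumes ker: "is_kernel C X X a K k" and a: "a \<in> H X X"
    and "arr \<alpha>" "arr \<beta>" "cd \<alpha> = K" "cd \<beta> = K" "dm \<alpha> = dm \<beta>" "\<alpha> \<cdot> k = \<beta> \<cdot> k"
  shows "\<alpha> = \<beta>"
proof -
  note kf = ker_facts[OF ker a]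
  have ha: "arr a" "dm a = X" "cd a = X" using a homI by auto
  have X: "X \<in> obj C" using ha by (metis arr_obj(1))
  let ?M = "dm \<alpha>"
  have M: "?M \<in> obj C" using assms by simp
  have g: "\<alpha> \<cdot> k \<in> H ?M X" using assms kf arr_hom by (metis comp_arr)
  have "(\<alpha> \<cdot> k) \<cdot> a = zr ?M X" using assms kf ha X by simp
  then have "\<exists>!\<alpha>'. \<alpha>' \<in> H ?M K \<and> \<alpha> \<cdot> k = \<alpha>' \<cdot> k"
    using ker M g unfolding is_kernel_def by blast
  moreover have "\<alpha> \<in> H ?M K" "\<beta> \<in> H ?M K" using assms arr_hom by metis+
  ultimately show ?thesis using assms by blast
qed

lemma ker_factor:
  assumes ker: "is_kernel C X X a K k" and "arr \<alpha>" "cd \<alpha> = X" "\<alpha> \<cdot> a = zr (dm \<alpha>) X"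
  shows "\<exists>w. arr w \<and> dm w = dm \<alpha> \<and> cd w = K \<and> \<alpha> = w \<cdot> k"
proof -
  have "\<alpha> \<in> H (dm \<alpha>) X" using assms arr_hom by metis
  then obtain w where "w \<in> H (dm \<alpha>) K" "\<alpha> = w \<cdot> k"
    using ker assms unfolding is_kernel_def by (meson arr_obj(1))
  then show ?thesis using homI by blast
qed

lemma inv_unique:
  assumes "is_inverse C A B f g1" "is_inverse C A B f g2" shows "g1 = g2"
proof -
  have h: "arr f" "dm f = A" "cd f = B" "arr g1" "dm g1 = B" "cd g1 = A" "arr g2" "dm g2 = B" "cd g2 = A"
    "f \<cdot> g1 = idt A" "g1 \<cdot> f = idt B" "f \<cdot> g2 = idt A" "g2 \<cdot> f = idt B"
    using assms homI unfolding is_inverse_def by auto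
  have "g1 = g1 \<cdot> (f \<cdot> g2)" using h by simp
  also have "\<dots> = (g1 \<cdot> f) \<cdot> g2" using h(1-9) by simp
  also have "\<dots> = g2" using h by simp
  finally show ?thesis .
qed

lemma inverse_m_eq: "is_inverse C A B f g \<Longrightarrow> inverse_m C A B f = g"
  unfolding inverse_m_def using inv_unique by blast


lemma distr4:
  assumes "arr P1" "arr P2" "arr Q1" "arr Q2" "dm P1 = dm P2" "cd P1 = cd P2" "dm Q1 = dm Q2"
    "cd Q1 = cd Q2" "cd P1 = dm Q1"
  shows "(pl P1 P2) \<cdot> (pl Q1 Q2) = pl (pl (P1 \<cdot> Q1) (P2 \<cdot> Q1)) (pl (P1 \<cdot> Q2) (P2 \<cdot> Q2))"
  using assms by simp

lemma core_facts:
  assumes a: "a \<in> H X X" and c: "is_core_inverse C X a x"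
  shows "arr x" "dm x = X" "cd x = X" "st (a \<cdot> x) = a \<cdot> x" "a \<cdot> (x \<cdot> x) = x" "x \<cdot> (a \<cdot> a) = a"
    "a \<cdot> (x \<cdot> a) = a" "x \<cdot> (a \<cdot> x) = x"
proof -
  have ha: "arr a" "dm a = X" "cd a = X" using a homI by auto
  show hx: "arr x" "dm x = X" "cd x = X" using c homI unfolding is_core_inverse_def by auto
  show c1: "st (a \<cdot> x) = a \<cdot> x" and c2: "a \<cdot> (x \<cdot> x) = x" and c3: "x \<cdot> (a \<cdot> a) = a"
    using c unfolding is_core_inverse_def by auto
  have "a \<cdot> (x \<cdot> a) = a \<cdot> (x \<cdot> (x \<cdot> (a \<cdot> a)))" unfolding c3 ..
  also have "\<dots> = (a \<cdot> (x \<cdot> x)) \<cdot> (a \<cdot> a)" using ha hx by simp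
  also have "\<dots> = a" unfolding c2 c3 ..
  finally show c4: "a \<cdot> (x \<cdot> a) = a" .
  have "x \<cdot> (a \<cdot> x) = x \<cdot> (a \<cdot> (a \<cdot> (x \<cdot> x)))" unfolding c2 ..
  also have "\<dots> = (x \<cdot> (a \<cdot> a)) \<cdot> (x \<cdot> x)" using ha hx by simp
  also have "\<dots> = x" unfolding c2 c3 ..
  finally show "x \<cdot> (a \<cdot> x) = x" .
qed

lemma core_unique:
  assumes a: "a \<in> H X X" and c1: "is_core_inverse C X a x1" and c2: "is_core_inverse C X a x2"
  shows "x1 = x2"
proof -
  have ha: "arr a" "dm a = X" "cd a = X" using a homI by auto
  note f1 = core_facts[OF a c1] and f2 = core_facts[OF a c2]
  have P12: "(a \<cdot> x1) \<cdot> (a \<cdot> x2) = a \<cdot> x2"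
  proof -
    have "(a \<cdot> x1) \<cdot> (a \<cdot> x2) = (a \<cdot> (x1 \<cdot> a)) \<cdot> x2" using ha f1(1-3) f2(1-3) by simp
    then show ?thesis unfolding f1(7) .
  qed
  have P21: "(a \<cdot> x2) \<cdot> (a \<cdot> x1) = a \<cdot> x1"
  proof -
    have "(a \<cdot> x2) \<cdot> (a \<cdot> x1) = (a \<cdot> (x2 \<cdot> a)) \<cdot> x1" using ha f1(1-3) f2(1-3) by simp
    then show ?thesis unfolding f2(7) .
  qed
  have PP: "a \<cdot> x1 = a \<cdot> x2"
  proof -
    have "a \<cdot> x1 = st (a \<cdot> x1)" using f1(4) by simp
    also have "\<dots> = st ((a \<cdot> x2) \<cdot> (a \<cdot> x1))" unfolding P21 ..
    also have "\<dots> = st (a \<cdot> x1) \<cdot> st (a \<cdot> x2)" by (rule st_comp) (use ha f1(1-3) f2(1-3) in simp_all)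
    also have "\<dots> = (a \<cdot> x1) \<cdot> (a \<cdot> x2)" unfolding f1(4) f2(4) ..
    also have "\<dots> = a \<cdot> x2" by (rule P12)
    finally show ?thesis .
  qed
  have "x1 = x1 \<cdot> (a \<cdot> x1)" using f1(8) by simp
  also have "\<dots> = x1 \<cdot> (a \<cdot> x2)" unfolding PP ..
  also have "\<dots> = x1 \<cdot> (a \<cdot> (a \<cdot> (x2 \<cdot> x2)))" unfolding f2(5) ..
  also have "\<dots> = (x1 \<cdot> (a \<cdot> a)) \<cdot> (x2 \<cdot> x2)" using ha f1(1-3) f2(1-3) by simp
  also have "\<dots> = a \<cdot> (x2 \<cdot> x2)" unfolding f1(6) ..
  also have "\<dots> = x2" by (rule f2(5))
  finally show ?thesis .
qed

context
  fixes X K L a k l s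
  assumes X: "X \<in> obj C" and K: "K \<in> obj C" and L: "L \<in> obj C" and a: "a \<in> H X X"
   and ker: "is_kernel C X X a K k" and cok: "is_cokernel C X X a L l"
   and sinv: "is_inverse C K L (k \<cdot> l) s"
begin

lemma B_ha[simp]: "arr a" "dm a = X" "cd a = X" using a homI by auto
lemma B_hk[simp]: "arr k" "dm k = K" "cd k = X" using ker_facts[OF ker a] by auto
lemma B_ka[simp]: "k \<cdot> a = zr K X" using ker_facts[OF ker a] by auto
lemma B_hl[simp]: "arr l" "dm l = X" "cd l = L" "a \<cdot> l = zr X L" using cok homI unfolding is_cokernel_def by auto
lemma B_hs[simp]: "arr s" "dm s = L" "cd s = K" using sinv homI unfolding is_inverse_def by auto
lemma B_obj[simp]: "X \<in> obj C" "K \<in> obj C" "L \<in> obj C" using X K L by auto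
lemma B_kls[simp]: "k \<cdot> (l \<cdot> s) = idt K"
  using sinv unfolding is_inverse_def by simp

lemma B_ka_ext[simp]: "arr x \<Longrightarrow> dm x = X \<Longrightarrow> k \<cdot> (a \<cdot> x) = zr K (cd x)"
  using ext2[OF B_ka] by simp
lemma B_al_ext[simp]: "arr x \<Longrightarrow> dm x = L \<Longrightarrow> a \<cdot> (l \<cdot> x) = zr X (cd x)"
  using ext2[OF B_hl(4)] by simp
lemma B_kls_ext[simp]: "arr x \<Longrightarrow> dm x = K \<Longrightarrow> k \<cdot> (l \<cdot> (s \<cdot> x)) = x"
  using ext3[OF B_kls] by simp

lemma cancel1:
  assumes "arr \<alpha>" "arr \<beta>" "dm \<alpha> = dm \<beta>" "cd \<alpha> = X" "cd \<beta> = X"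
    "\<alpha> \<cdot> a = \<beta> \<cdot> a" "\<alpha> \<cdot> l = \<beta> \<cdot> l"
  shows "\<alpha> = \<beta>"
proof -
  let ?d = "pl \<alpha> (ng \<beta>)"
  have hd: "arr ?d" "dm ?d = dm \<alpha>" "cd ?d = X" using assms(1-5) by simp_all
  have "?d \<cdot> a = pl (\<alpha> \<cdot> a) (ng (\<beta> \<cdot> a))" using assms(1-5) by simp
  also have "\<dots> = zr (dm \<alpha>) X" using assms by simp
  finally have da: "?d \<cdot> a = zr (dm ?d) X" using hd by simp
  obtain w where w: "arr w" "dm w = dm \<alpha>" "cd w = K" "?d = w \<cdot> k"
    using ker_factor[OF ker hd(1,3) da] hd(2) by auto
  have "?d \<cdot> l = pl (\<alpha> \<cdot> l) (ng (\<beta> \<cdot> l))" using assms(1-5) by simp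
  also have "\<dots> = zr (dm \<alpha>) L" using assms by simp
  finally have dl0: "?d \<cdot> l = zr (dm \<alpha>) L" .
  have dl: "w \<cdot> (k \<cdot> l) = zr (dm \<alpha>) L" using dl0 w(1-3) unfolding w(4) by simp
  have "w = w \<cdot> (k \<cdot> (l \<cdot> s))" using w(1-3) by simp
  also have "\<dots> = (w \<cdot> (k \<cdot> l)) \<cdot> s" using w(1-3) by simp
  also have "\<dots> = zr (dm \<alpha>) K" unfolding dl using w(1-3) assms(1) by simp
  finally have "?d = zr (dm \<alpha>) X" using w assms(1) by simp
  then show ?thesis using eq_of_diff assms(1-5) by simp
qed

lemma cancelj:
  assumes "arr \<alpha>" "arr \<beta>" "dm \<alpha> = dm \<beta>" "cd \<alpha> = X" "cd \<beta> = X"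
    "\<alpha> \<cdot> mpow C X a (Suc j) = \<beta> \<cdot> mpow C X a (Suc j)" "\<alpha> \<cdot> l = \<beta> \<cdot> l"
  shows "\<alpha> = \<beta>"
  using assms
proof (induction j arbitrary: \<alpha> \<beta>)
  case 0
  have "\<alpha> \<cdot> a = \<beta> \<cdot> a" using "0.prems" by simp
  then show ?case by (rule cancel1[rotated 5]) (use "0.prems" in simp_all)
next
  case (Suc j)
  have e: "mpow C X a (Suc (Suc j)) = a \<cdot> mpow C X a (Suc j)"
    using mpow_comm[of a X "Suc j"] by simp
  have "\<alpha> \<cdot> (a \<cdot> mpow C X a (Suc j)) = \<beta> \<cdot> (a \<cdot> mpow C X a (Suc j))"
    using Suc.prems(6) unfolding e .
  then have 1: "(\<alpha> \<cdot> a) \<cdot> mpow C X a (Suc j) = (\<beta> \<cdot> a) \<cdot> mpow C X a (Suc j)"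
    using Suc.prems(1-5) by simp
  have 2: "(\<alpha> \<cdot> a) \<cdot> l = (\<beta> \<cdot> a) \<cdot> l" using Suc.prems(1-5) by simp
  have "\<alpha> \<cdot> a = \<beta> \<cdot> a" by (rule Suc.IH[OF _ _ _ _ _ 1 2]) (use Suc.prems(1-5) in simp_all)
  then show ?case by (rule cancel1[rotated 5]) (use Suc.prems in simp_all)
qed

lemma backward:
  assumes m: "m \<ge> 1"
    and vinv: "is_inverse C X X (pl (st a \<cdot> mpow C X a (Suc m)) (st k \<cdot> k)) v"
  shows "is_core_inverse C X a ((mpow C X a m \<cdot> v) \<cdot> st a)"
proof -
  define p where "p = mpow C X a m"
  obtain j where mj: "m = Suc j" using m by (cases m) auto
  have hp[simp]: "arr p" "dm p = X" "cd p = X" unfolding p_def by simp_all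
  have apn: "mpow C X a (Suc m) = p \<cdot> a" unfolding p_def by simp
  have comm: "a \<cdot> p = p \<cdot> a" unfolding p_def using mpow_comm[of a X m] by simp
  define u where "u = pl (st a \<cdot> (p \<cdot> a)) (st k \<cdot> k)"
  have hu[simp]: "arr u" "dm u = X" "cd u = X" unfolding u_def by simp_all
  have hv[simp]: "arr v" "dm v = X" "cd v = X" and vu: "v \<cdot> u = idt X" and uv: "u \<cdot> v = idt X"
    using vinv homI unfolding is_inverse_def u_def apn by auto
  have "a = (v \<cdot> u) \<cdot> a" using vu by simp
  also have "\<dots> = v \<cdot> (st a \<cdot> (p \<cdot> (a \<cdot> a)))" unfolding u_def by simp
  finally have F1: "v \<cdot> (st a \<cdot> (p \<cdot> (a \<cdot> a))) = a" by (rule sym)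
  have "l = (v \<cdot> u) \<cdot> l" using vu by simp
  also have "\<dots> = v \<cdot> (st k \<cdot> (k \<cdot> l))" unfolding u_def by simp
  finally have F5a: "v \<cdot> (st k \<cdot> (k \<cdot> l)) = l" by (rule sym)
  have "v \<cdot> st k = v \<cdot> (st k \<cdot> (k \<cdot> (l \<cdot> s)))" by simp
  also have "\<dots> = (v \<cdot> (st k \<cdot> (k \<cdot> l))) \<cdot> s" by simp
  also have "\<dots> = l \<cdot> s" unfolding F5a ..
  finally have F5: "v \<cdot> st k = l \<cdot> s" .
  have F5ext[simp]: "arr x \<Longrightarrow> dm x = K \<Longrightarrow> v \<cdot> (st k \<cdot> x) = l \<cdot> (s \<cdot> x)" for x
    using ext2[OF F5] by simp
  have "a = a \<cdot> (v \<cdot> u)" using vu by simp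
  also have "\<dots> = a \<cdot> (v \<cdot> (st a \<cdot> (p \<cdot> a)))" unfolding u_def by simp
  finally have F2: "a \<cdot> (v \<cdot> (st a \<cdot> (p \<cdot> a))) = a" by (rule sym)
  define Q where "Q = a \<cdot> (p \<cdot> (v \<cdot> st a))"
  have hQ[simp]: "arr Q" "dm Q = X" "cd Q = X" unfolding Q_def by simp_all
  have "(Q \<cdot> a) \<cdot> p = a \<cdot> (p \<cdot> (v \<cdot> (st a \<cdot> (a \<cdot> p))))" unfolding Q_def by simp
  also have "\<dots> = a \<cdot> (p \<cdot> (v \<cdot> (st a \<cdot> (p \<cdot> a))))" unfolding comm ..
  also have "\<dots> = (a \<cdot> p) \<cdot> (v \<cdot> (st a \<cdot> (p \<cdot> a)))" by simp
  also have "\<dots> = (p \<cdot> a) \<cdot> (v \<cdot> (st a \<cdot> (p \<cdot> a)))" unfolding comm ..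
  also have "\<dots> = p \<cdot> (a \<cdot> (v \<cdot> (st a \<cdot> (p \<cdot> a))))" by simp
  also have "\<dots> = p \<cdot> a" unfolding F2 ..
  also have "\<dots> = a \<cdot> p" unfolding comm ..
  finally have Qap: "(Q \<cdot> a) \<cdot> mpow C X a (Suc j) = a \<cdot> mpow C X a (Suc j)"
    unfolding p_def mj .
  have Qal: "(Q \<cdot> a) \<cdot> l = a \<cdot> l" unfolding Q_def by simp
  have Qa: "Q \<cdot> a = a" by (rule cancelj[OF _ _ _ _ _ Qap Qal]) simp_all
  have Qa_ext: "Q \<cdot> (a \<cdot> x) = a \<cdot> x" if "arr x" "dm x = X" for x
    using ext2[OF Qa] that by simp
  have "st a \<cdot> st Q = st (Q \<cdot> a)" by simp
  then have sQ: "st a \<cdot> st Q = st a" unfolding Qa .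
  have QQ: "Q = Q \<cdot> st Q"
  proof -
    have 1: "a \<cdot> (p \<cdot> (v \<cdot> (st a \<cdot> st Q))) = Q" by (unfold sQ, unfold Q_def, rule refl)
    have 2: "Q \<cdot> st Q = a \<cdot> (p \<cdot> (v \<cdot> (st a \<cdot> st Q)))" unfolding Q_def by simp
    show ?thesis using 1 2 by simp
  qed
  have herm: "st Q = Q"
  proof -
    have "st Q = st (Q \<cdot> st Q)" using QQ by (rule arg_cong)
    also have "\<dots> = Q \<cdot> st Q" by simp
    also have "\<dots> = Q" using QQ by (rule sym)
    finally show ?thesis .
  qed
  have Qp: "Q \<cdot> p = p"
  proof -
    have e: "p = a \<cdot> mpow C X a j" unfolding p_def mj using mpow_comm[of a X j] by simp
    show ?thesis unfolding e by (rule Qa_ext) simp_all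
  qed
  let ?x = "(mpow C X a m \<cdot> v) \<cdot> st a"
  have xe: "?x = p \<cdot> (v \<cdot> st a)" unfolding p_def by simp
  have c1: "st (a \<cdot> ?x) = a \<cdot> ?x"
  proof -
    have "a \<cdot> ?x = Q" unfolding xe Q_def ..
    then show ?thesis using herm by simp
  qed
  have c2: "a \<cdot> (?x \<cdot> ?x) = ?x"
  proof -
    have "a \<cdot> (?x \<cdot> ?x) = (a \<cdot> (p \<cdot> (v \<cdot> st a))) \<cdot> (p \<cdot> (v \<cdot> st a))" unfolding xe by simp
    also have "\<dots> = (Q \<cdot> p) \<cdot> (v \<cdot> st a)" unfolding Q_def by simp
    also have "\<dots> = ?x" unfolding Qp xe ..
    finally show ?thesis .
  qed
  have c3: "?x \<cdot> (a \<cdot> a) = a"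
  proof (rule cancelj[of _ _ j])
    have "(?x \<cdot> (a \<cdot> a)) \<cdot> p = p \<cdot> (v \<cdot> (st a \<cdot> (a \<cdot> (a \<cdot> p))))" unfolding xe by simp
    also have "\<dots> = p \<cdot> (v \<cdot> (st a \<cdot> (a \<cdot> (p \<cdot> a))))" unfolding comm ..
    also have "\<dots> = p \<cdot> (v \<cdot> (st a \<cdot> ((a \<cdot> p) \<cdot> a)))" by simp
    also have "\<dots> = p \<cdot> (v \<cdot> (st a \<cdot> ((p \<cdot> a) \<cdot> a)))" unfolding comm ..
    also have "\<dots> = p \<cdot> (v \<cdot> (st a \<cdot> (p \<cdot> (a \<cdot> a))))" by simp
    also have "\<dots> = p \<cdot> a" unfolding F1 ..
    also have "\<dots> = a \<cdot> p" unfolding comm ..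
    finally show "(?x \<cdot> (a \<cdot> a)) \<cdot> mpow C X a (Suc j) = a \<cdot> mpow C X a (Suc j)"
      unfolding p_def mj .
  qed (simp_all add: xe)
  have hx: "?x \<in> H X X" using arr_hom[of ?x] unfolding xe by simp
  show ?thesis unfolding is_core_inverse_def using hx c1 c2 c3 by blast
qed

end

declare B_ha[simp del] B_hk[simp del] B_ka[simp del] B_hl[simp del] B_hs[simp del] B_obj[simp del] B_kls[simp del] B_ka_ext[simp del] B_al_ext[simp del] B_kls_ext[simp del]


context
  fixes X K a k x
  assumes X: "X \<in> obj C" and K: "K \<in> obj C" and a: "a \<in> H X X"
   and ker: "is_kernel C X X a K k" and core: "is_core_inverse C X a x"
begin

lemmas F_ha[simp] = homI[OF a]
lemmas F_hk[simp] = ker_facts(1-3)[OF ker a]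
lemmas F_ka[simp] = ker_facts(4)[OF ker a]
lemmas F_obj[simp] = X K
lemmas F_hx[simp] = core_facts(1-3)[OF a core]
lemmas F_c = core_facts(4-8)[OF a core]

lemma F_ka_ext[simp]: "arr y \<Longrightarrow> dm y = X \<Longrightarrow> k \<cdot> (a \<cdot> y) = zr K (cd y)"
  using ext2[OF F_ka] by simp

lemma F_kx[simp]: "k \<cdot> x = zr K X"
proof -
  have "k \<cdot> x = k \<cdot> (a \<cdot> (x \<cdot> x))" unfolding F_c(2) ..
  also have "\<dots> = zr K X" by simp
  finally show ?thesis .
qed
lemma F_kx_ext[simp]: "arr y \<Longrightarrow> dm y = X \<Longrightarrow> k \<cdot> (x \<cdot> y) = zr K (cd y)"
  using ext2[OF F_kx] by simp

lemma mpow_xa: "mpow C X x (Suc j) \<cdot> mpow C X a (Suc j) = x \<cdot> a"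
proof (induction j)
  case 0 then show ?case by simp
next
  case (Suc j)
  have e: "mpow C X a (Suc (Suc j)) = a \<cdot> (a \<cdot> mpow C X a j)"
    using mpow_comm[of a X "Suc j"] mpow_comm[of a X j] by simp
  have "x \<cdot> mpow C X a (Suc (Suc j)) = (x \<cdot> (a \<cdot> a)) \<cdot> mpow C X a j" unfolding e by simp
  also have "\<dots> = mpow C X a (Suc j)" unfolding F_c(3) using mpow_comm[of a X j] by simp
  finally have 1: "x \<cdot> mpow C X a (Suc (Suc j)) = mpow C X a (Suc j)" .
  have "mpow C X x (Suc (Suc j)) \<cdot> mpow C X a (Suc (Suc j))
       = mpow C X x (Suc j) \<cdot> (x \<cdot> mpow C X a (Suc (Suc j)))"
    by (subst mpow.simps(2)) (rule assoc, simp_all)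
  also have "\<dots> = x \<cdot> a" unfolding 1 by (rule Suc.IH)
  finally show ?case .
qed

lemma mpow_ax: "mpow C X a (Suc j) \<cdot> mpow C X x (Suc j) = a \<cdot> x"
proof (induction j)
  case 0 then show ?case by simp
next
  case (Suc j)
  have e: "mpow C X a (Suc (Suc j)) = a \<cdot> mpow C X a (Suc j)"
    using mpow_comm[of a X "Suc j"] by simp
  have "mpow C X a (Suc (Suc j)) \<cdot> mpow C X x (Suc (Suc j))
      = a \<cdot> ((mpow C X a (Suc j) \<cdot> mpow C X x (Suc j)) \<cdot> x)"
    unfolding e by (subst (2) mpow.simps(2)) simp
  also have "\<dots> = a \<cdot> (a \<cdot> (x \<cdot> x))" unfolding Suc.IH by simp
  also have "\<dots> = a \<cdot> x" unfolding F_c(2) ..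
  finally show ?case .
qed

lemma forward:
  shows "\<exists>L\<in>obj C. \<exists>lm. is_cokernel C X X a L lm \<and>
              invertible C K L (k \<cdot> lm) \<and>
              invertible C X X (pl (st a \<cdot> mpow C X a (Suc m)) (st k \<cdot> k))"
proof -
  define E where "E = x \<cdot> a"
  have hE[simp]: "arr E" "dm E = X" "cd E = X" unfolding E_def by simp_all
  define D where "D = pl (idt X) (ng E)"
  have hD[simp]: "arr D" "dm D = X" "cd D = X" unfolding D_def by simp_all
  have "D \<cdot> a = pl a (ng (x \<cdot> (a \<cdot> a)))" unfolding D_def E_def by simp
  also have "\<dots> = zr X X" unfolding F_c(3) by simp
  finally have Da: "D \<cdot> a = zr (dm D) X" by simp
  obtain w where hw[simp]: "arr w" "dm w = X" "cd w = K" and Dw: "D = w \<cdot> k"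
    using ker_factor[OF ker hD(1,3) Da] by auto
  have Dw_ext: "w \<cdot> (k \<cdot> y) = D \<cdot> y" if "arr y" "dm y = X" for y
    unfolding Dw using that by simp
  have "k \<cdot> D = pl k (ng (k \<cdot> (x \<cdot> a)))" unfolding D_def E_def by simp
  also have "\<dots> = k" by simp
  finally have kD: "k \<cdot> D = k" .
  have kw[simp]: "k \<cdot> w = idt K"
  proof (rule ker_mono[OF ker a])
    show "(k \<cdot> w) \<cdot> k = idt K \<cdot> k" using kD unfolding Dw by simp
  qed simp_all
  have kw_ext[simp]: "k \<cdot> (w \<cdot> y) = y" if "arr y" "dm y = K" for y
    using ext2[OF kw] that by simp
  have EwK: "pl E (w \<cdot> k) = idt X"
  proof -
    have "pl E (w \<cdot> k) = pl E D" unfolding Dw ..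
    also have "\<dots> = pl D E" by (rule pl_comm) simp_all
    also have "\<dots> = pl (idt X) (pl (ng E) E)" unfolding D_def by (rule pl_assoc) simp_all
    also have "\<dots> = idt X" by simp
    finally show ?thesis .
  qed
  have aw[simp]: "a \<cdot> w = zr X K"
  proof (rule ker_mono[OF ker a])
    have "(a \<cdot> w) \<cdot> k = a \<cdot> D" unfolding Dw by simp
    also have "\<dots> = pl a (ng (a \<cdot> (x \<cdot> a)))" unfolding D_def E_def by simp
    also have "\<dots> = zr X K \<cdot> k" unfolding F_c(4) by simp
    finally show "(a \<cdot> w) \<cdot> k = zr X K \<cdot> k" .
  qed simp_all
  have aw_ext[simp]: "a \<cdot> (w \<cdot> y) = zr X (cd y)" if "arr y" "dm y = K" for y
    using ext2[OF aw] that by simp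
  have cok: "is_cokernel C X X a K w"
    unfolding is_cokernel_def
  proof (intro conjI ballI impI)
    show "w \<in> H X K" using arr_hom[of w] by simp
    show "a \<cdot> w = zr X K" by simp
    fix M \<beta> assume M: "M \<in> obj C" and b: "\<beta> \<in> H X M" and ab: "a \<cdot> \<beta> = zr X M"
    have hb[simp]: "arr \<beta>" "dm \<beta> = X" "cd \<beta> = M" using b homI by auto
    show "\<exists>!\<beta>'. \<beta>' \<in> H K M \<and> \<beta> = w \<cdot> \<beta>'"
    proof (rule ex1I[of _ "k \<cdot> \<beta>"])
      have "w \<cdot> (k \<cdot> \<beta>) = D \<cdot> \<beta>" by (rule Dw_ext) simp_all
      also have "\<dots> = pl \<beta> (ng (x \<cdot> (a \<cdot> \<beta>)))" unfolding D_def E_def by simp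
      also have "\<dots> = \<beta>" unfolding ab using M by simp
      finally show "k \<cdot> \<beta> \<in> H K M \<and> \<beta> = w \<cdot> (k \<cdot> \<beta>)"
        using arr_hom[of "k \<cdot> \<beta>"] by simp
    next
      fix b' assume "b' \<in> H K M \<and> \<beta> = w \<cdot> b'"
      then have "arr b'" "dm b' = K" "\<beta> = w \<cdot> b'" using homI by auto
      then show "b' = k \<cdot> \<beta>" by simp
    qed
  qed
  have inv1: "invertible C K K (k \<cdot> w)"
    unfolding invertible_def is_inverse_def using arr_hom[of "idt K"] by auto
  define A where "A = mpow C X a (Suc m)"
  define Y where "Y = mpow C X x (Suc m)"
  have hA[simp]: "arr A" "dm A = X" "cd A = X" unfolding A_def by simp_all
  have hY[simp]: "arr Y" "dm Y = X" "cd Y = X" unfolding Y_def by simp_all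
  have YA: "Y \<cdot> A = x \<cdot> a" unfolding A_def Y_def by (rule mpow_xa)
  have AY: "A \<cdot> Y = a \<cdot> x" unfolding A_def Y_def by (rule mpow_ax)
  have Ae: "A = a \<cdot> mpow C X a m" unfolding A_def using mpow_comm[of a X m] by simp
  have Ye: "Y = x \<cdot> mpow C X x m" unfolding Y_def using mpow_comm[of x X m] by simp
  have kY: "k \<cdot> Y = zr K X" unfolding Ye by simp
  have Aw: "A \<cdot> w = zr X K" unfolding A_def by simp
  have PA: "(a \<cdot> x) \<cdot> A = A"
  proof -
    have "(a \<cdot> x) \<cdot> A = (a \<cdot> (x \<cdot> a)) \<cdot> mpow C X a m" unfolding Ae by simp
    also have "\<dots> = A" unfolding F_c(4) Ae ..
    finally show ?thesis .
  qed
  define u where "u = pl (st a \<cdot> A) (st k \<cdot> k)"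
  define v where "v = pl (Y \<cdot> st x) (w \<cdot> st w)"
  have hu[simp]: "arr u" "dm u = X" "cd u = X" unfolding u_def by simp_all
  have hv[simp]: "arr v" "dm v = X" "cd v = X" unfolding v_def by simp_all
  have p11: "(Y \<cdot> st x) \<cdot> (st a \<cdot> A) = x \<cdot> a"
  proof -
    have sxa: "st x \<cdot> st a = a \<cdot> x" using st_comp[of a x] F_c(1) by simp
    have "(Y \<cdot> st x) \<cdot> (st a \<cdot> A) = Y \<cdot> ((st x \<cdot> st a) \<cdot> A)" by simp
    also have "\<dots> = x \<cdot> a" unfolding sxa PA YA ..
    finally show ?thesis .
  qed
  have swa: "st w \<cdot> st a = zr K X" using st_comp[of a w] by simp
  have sxk: "st x \<cdot> st k = zr X K" using st_comp[of k x] by simp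
  have swk: "st w \<cdot> st k = idt K" using st_comp[of k w] by simp
  have p21: "(w \<cdot> st w) \<cdot> (st a \<cdot> A) = zr X X"
  proof -
    have "(w \<cdot> st w) \<cdot> (st a \<cdot> A) = w \<cdot> ((st w \<cdot> st a) \<cdot> A)" by simp
    also have "\<dots> = zr X X" unfolding swa by simp
    finally show ?thesis .
  qed
  have p12: "(Y \<cdot> st x) \<cdot> (st k \<cdot> k) = zr X X"
  proof -
    have "(Y \<cdot> st x) \<cdot> (st k \<cdot> k) = Y \<cdot> ((st x \<cdot> st k) \<cdot> k)" by simp
    also have "\<dots> = zr X X" unfolding sxk by simp
    finally show ?thesis .
  qed
  have p22: "(w \<cdot> st w) \<cdot> (st k \<cdot> k) = w \<cdot> k"
  proof -
    have "(w \<cdot> st w) \<cdot> (st k \<cdot> k) = w \<cdot> ((st w \<cdot> st k) \<cdot> k)" by simp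
    also have "\<dots> = w \<cdot> k" unfolding swk by simp
    finally show ?thesis .
  qed
  have vu: "v \<cdot> u = idt X"
  proof -
    have "v \<cdot> u = pl (pl ((Y \<cdot> st x) \<cdot> (st a \<cdot> A)) ((w \<cdot> st w) \<cdot> (st a \<cdot> A)))
        (pl ((Y \<cdot> st x) \<cdot> (st k \<cdot> k)) ((w \<cdot> st w) \<cdot> (st k \<cdot> k)))"
      unfolding u_def v_def by (rule distr4) simp_all
    also have "\<dots> = pl (pl (x \<cdot> a) (zr X X)) (pl (zr X X) (w \<cdot> k))"
      unfolding p11 p12 p21 p22 ..
    also have "\<dots> = idt X" using EwK unfolding E_def by simp
    finally show ?thesis .
  qed
  have sa1: "st a \<cdot> (a \<cdot> x) = st a"
  proof -
    have "st a \<cdot> (a \<cdot> x) = st a \<cdot> st (a \<cdot> x)" unfolding F_c(1) ..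
    also have "\<dots> = st ((a \<cdot> x) \<cdot> a)" by (rule st_comp[symmetric]) simp_all
    also have "\<dots> = st a" using F_c(4) by simp
    finally show ?thesis .
  qed
  have q11: "(st a \<cdot> A) \<cdot> (Y \<cdot> st x) = st (x \<cdot> a)"
  proof -
    have "(st a \<cdot> A) \<cdot> (Y \<cdot> st x) = (st a \<cdot> (A \<cdot> Y)) \<cdot> st x" by simp
    also have "\<dots> = st a \<cdot> st x" unfolding AY sa1 ..
    also have "\<dots> = st (x \<cdot> a)" by (rule st_comp[symmetric]) simp_all
    finally show ?thesis .
  qed
  have q12: "(st a \<cdot> A) \<cdot> (w \<cdot> st w) = zr X X"
  proof -
    have "(st a \<cdot> A) \<cdot> (w \<cdot> st w) = st a \<cdot> ((A \<cdot> w) \<cdot> st w)" by simp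
    also have "\<dots> = zr X X" unfolding Aw by simp
    finally show ?thesis .
  qed
  have q21: "(st k \<cdot> k) \<cdot> (Y \<cdot> st x) = zr X X"
  proof -
    have "(st k \<cdot> k) \<cdot> (Y \<cdot> st x) = st k \<cdot> ((k \<cdot> Y) \<cdot> st x)" by simp
    also have "\<dots> = zr X X" unfolding kY by simp
    finally show ?thesis .
  qed
  have q22: "(st k \<cdot> k) \<cdot> (w \<cdot> st w) = st (w \<cdot> k)"
  proof -
    have "(st k \<cdot> k) \<cdot> (w \<cdot> st w) = st k \<cdot> ((k \<cdot> w) \<cdot> st w)" by simp
    also have "\<dots> = st (w \<cdot> k)" unfolding kw by simp
    finally show ?thesis .
  qed
  have uv: "u \<cdot> v = idt X"
  proof -
    have "u \<cdot> v = pl (pl ((st a \<cdot> A) \<cdot> (Y \<cdot> st x)) ((st k \<cdot> k) \<cdot> (Y \<cdot> st x)))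
        (pl ((st a \<cdot> A) \<cdot> (w \<cdot> st w)) ((st k \<cdot> k) \<cdot> (w \<cdot> st w)))"
      unfolding u_def v_def by (rule distr4) simp_all
    also have "\<dots> = pl (pl (st (x \<cdot> a)) (zr X X)) (pl (zr X X) (st (w \<cdot> k)))"
      unfolding q11 q12 q21 q22 ..
    also have "\<dots> = st (pl (x \<cdot> a) (w \<cdot> k))" by simp
    also have "\<dots> = idt X" using EwK unfolding E_def by simp
    finally show ?thesis .
  qed
  have inv2: "invertible C X X (pl (st a \<cdot> mpow C X a (Suc m)) (st k \<cdot> k))"
    unfolding invertible_def is_inverse_def
    using arr_hom[of u] arr_hom[of v] vu uv unfolding u_def A_def by auto
  show ?thesis using cok inv1 inv2 K by blast
qed

end

declare F_ha[simp del] F_hk[simp del] F_ka[simp del] F_obj[simp del] F_hx[simp del] F_ka_ext[simp del] F_kx[simp del] F_kx_ext[simp del]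

end

theorem mainTheorem3:
  fixes C :: "('o, 'm) invcat" and n :: nat and X K :: 'o and \<phi> \<kappa> :: 'm
  assumes "is_additive_invcat C"
    and "n \<ge> 3"
    and "X \<in> obj C" and "\<phi> \<in> hom C X X"
    and "K \<in> obj C" and "is_kernel C X X \<phi> K \<kappa>"
  shows "(has_core_inverse C X \<phi> \<longleftrightarrow>
           (\<exists>L\<in>obj C. \<exists>lm. is_cokernel C X X \<phi> L lm \<and>
              invertible C K L (comp C \<kappa> lm) \<and>
              invertible C X X (plus_m C (comp C (star_m C \<phi>) (mpow C X \<phi> n))
                                         (comp C (star_m C \<kappa>) \<kappa>))))
       \<and> (has_core_inverse C X \<phi> \<longrightarrow>
           core_inverse C X \<phi> =
             comp C (comp C (mpow C X \<phi> (n - 1))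
                            (inverse_m C X X (plus_m C (comp C (star_m C \<phi>) (mpow C X \<phi> n))
                                                       (comp C (star_m C \<kappa>) \<kappa>))))
                    (star_m C \<phi>))"
proof -
  interpret aic C using assms(1) by unfold_locales
  define m where "m = n - 1"
  have nm: "n = Suc m" and m1: "m \<ge> 1" using assms(2) unfolding m_def by auto
  let ?u = "plus_m C (comp C (star_m C \<phi>) (mpow C X \<phi> n)) (comp C (star_m C \<kappa>) \<kappa>)"
  have bwd: "is_core_inverse C X \<phi> (comp C (comp C (mpow C X \<phi> m) (inverse_m C X X ?u)) (star_m C \<phi>))"
    if L: "L \<in> obj C" and cok: "is_cokernel C X X \<phi> L lm" and i1: "invertible C K L (comp C \<kappa> lm)"
      and i2: "invertible C X X ?u" for L lm
  proof -
    obtain s where s: "is_inverse C K L (comp C \<kappa> lm) s" using i1 unfolding invertible_def by blast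
    obtain v where v: "is_inverse C X X ?u v" using i2 unfolding invertible_def by blast
    have iv: "inverse_m C X X ?u = v" by (rule inverse_m_eq[OF v])
    show ?thesis unfolding iv
      by (rule backward[OF assms(3) assms(5) L assms(4) assms(6) cok s m1]) (use v nm in simp)
  qed
  have fwd: "\<exists>L\<in>obj C. \<exists>lm. is_cokernel C X X \<phi> L lm \<and>
              invertible C K L (comp C \<kappa> lm) \<and> invertible C X X ?u"
    if h: "has_core_inverse C X \<phi>"
  proof -
    obtain x where x: "is_core_inverse C X \<phi> x" using h unfolding has_core_inverse_def by blast
    show ?thesis unfolding nm by (rule forward[OF assms(3) assms(5) assms(4) assms(6) x])
  qed
  have part1: "has_core_inverse C X \<phi> \<longleftrightarrow>
           (\<exists>L\<in>obj C. \<exists>lm. is_cokernel C X X \<phi> L lm \<and>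
              invertible C K L (comp C \<kappa> lm) \<and> invertible C X X ?u)"
  proof
    assume "has_core_inverse C X \<phi>" then show "\<exists>L\<in>obj C. \<exists>lm. is_cokernel C X X \<phi> L lm \<and>
              invertible C K L (comp C \<kappa> lm) \<and> invertible C X X ?u" by (rule fwd)
  next
    assume "\<exists>L\<in>obj C. \<exists>lm. is_cokernel C X X \<phi> L lm \<and>
              invertible C K L (comp C \<kappa> lm) \<and> invertible C X X ?u"
    then show "has_core_inverse C X \<phi>" unfolding has_core_inverse_def using bwd by blast
  qed
  have part2: "core_inverse C X \<phi> =
             comp C (comp C (mpow C X \<phi> (n - 1)) (inverse_m C X X ?u)) (star_m C \<phi>)"
    if h: "has_core_inverse C X \<phi>"
  proof -
    obtain L lm where "L \<in> obj C" "is_cokernel C X X \<phi> L lm"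
       "invertible C K L (comp C \<kappa> lm)" "invertible C X X ?u" using fwd[OF h] by blast
    then have c: "is_core_inverse C X \<phi> (comp C (comp C (mpow C X \<phi> m) (inverse_m C X X ?u)) (star_m C \<phi>))"
      by (rule bwd)
    show ?thesis unfolding core_inverse_def m_def[symmetric]
      using core_unique[OF assms(4) c] c by blast
  qed
  show ?thesis using part1 part2 by blast
qed

end
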